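(* Run the algorithm POLAR described in the context with ridge parameter $\lambda\ge 1$, and suppose $\|x_t\|_2\le1$ for all $t$. On the event $$\mathcal{E}:=\bigl\{\,|x_t^\top(\hat\theta_{a,t}-\theta_a^\star)|\le\beta_t\,s_{a,t}\ \text{for all } a\in\mathcal{M},\ t\le T\,\bigr\},$$ we have $$\sum_{t=1}^T\Bigl[\max_{a\in\mathcal{M}}\mu_t(a;C_{\ell(t)})-\mu_t(a_t;C_{\ell(t)})\Bigr]\le 2\beta_T\sqrt{2NdT\log\Bigl(1+\frac{T}{d\lambda}\Bigr)}.$$
   Context: Library $\mathcal{M}=\{1,\dots,N\}$, cache size $K$, contexts $x_t\in\mathbb{R}^d$, unknown $\theta_a^\star\in\mathbb{R}^d$, known penalties $\lambda_a>0$, weight $\alpha>0$, switching cost $\gamma>0$. Playing $a_t$ reveals $q_t(a_t)=\langle\theta_{a_t}^\star,x_t\rangle+\eta_t(a_t)$. A cache $C_\ell$ ($|C_\ell|\le K$) is fixed in epoch $\ell$; $\ell(t)$ is the epoch of round $t$; $\mu_t(a;C):=\langle\theta_a^\star,x_t\rangle-\alpha\lambda_a\mathbf{1}\{a\notin C\}$. Define $V_{a,t}:=\lambda I_d+\sum_{s<t}\mathbf{1}\{a_s=a\}x_sx_s^\top$, $\hat\theta_{a,t}:=V_{a,t}^{-1}\sum_{s<t}\mathbf{1}\{a_s=a\}q_s(a)x_s$, $s_{a,t}:=\sqrt{x_t^\top V_{a,t}^{-1}x_t}$, $\beta_t:=\sigma\sqrt{d\log(1+\tfrac{t}{d\lambda})+2\log\tfrac{N}{\delta}}+\sqrt\lambda$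 (a nondecreasing sequence), and $\mathrm{score}_t(a):=\langle\hat\theta_{a,t},x_t\rangle+\beta_ts_{a,t}-\alpha\lambda_a\mathbf{1}\{a\notin C_{\ell(t)}\}$. Algorithm POLAR: epochs of $H$ rounds; $C_1$ arbitrary with $|C_1|\le K$; at each epoch boundary $\ell>1$ the cache is replaced by the output of a greedy marginal-gain procedure (adding at most $K$ adapters, based on UCB values $\langle\hat\theta_a,x_t\rangle+\beta_t\sqrt{x_t^\top V_a^{-1}x_t}$ on the previous epoch's contexts, penalties $\alpha\lambda_a$ and switching cost $\gamma$); in every round it plays $a_t\in\arg\max_a\mathrm{score}_t(a)$, observes $q_t(a_t)$ and updates $V_{a_t},\hat\theta_{a_t}$. *)

theory Defs
  imports "HOL-Analysis.Analysis"
begin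

(* Rounds are indexed t = 1, 2, ...; arms form a finite type 'arm (N = CARD('arm));
   contexts live in real^'d (d = CARD('d)). *)

definition outer :: "real^'d \<Rightarrow> real^'d^'d" where
  "outer v = (\<chi> i j. v$i * v$j)"

definition Vmat :: "real \<Rightarrow> (nat \<Rightarrow> real^'d) \<Rightarrow> (nat \<Rightarrow> 'arm) \<Rightarrow> 'arm \<Rightarrow> nat \<Rightarrow> real^'d^'d" where
  "Vmat lam x act a t = lam *\<^sub>R mat 1 + (\<Sum>s\<in>{s\<in>{1..<t}. act s = a}. outer (x s))"

(* ridge estimate; q s is the observed reward q_s(a_s) *)
definition theta_hat :: "real \<Rightarrow> (nat \<Rightarrow> real^'d) \<Rightarrow> (nat \<Rightarrow> 'arm) \<Rightarrow> (nat \<Rightarrow> real) \<Rightarrow> 'arm \<Rightarrow> nat \<Rightarrow> real^'d" where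
  "theta_hat lam x act q a t =
     matrix_inv (Vmat lam x act a t) *v (\<Sum>s\<in>{s\<in>{1..<t}. act s = a}. q s *\<^sub>R x s)"

definition swidth :: "real \<Rightarrow> (nat \<Rightarrow> real^'d) \<Rightarrow> (nat \<Rightarrow> 'arm) \<Rightarrow> 'arm \<Rightarrow> nat \<Rightarrow> real" where
  "swidth lam x act a t = sqrt (x t \<bullet> (matrix_inv (Vmat lam x act a t) *v x t))"

definition betaT :: "real \<Rightarrow> real \<Rightarrow> real \<Rightarrow> nat \<Rightarrow> nat \<Rightarrow> nat \<Rightarrow> real" where
  "betaT sig lam delta N d t =
     sig * sqrt (real d * ln (1 + real t / (real d * lam)) + 2 * ln (real N / delta)) + sqrt lam"

definition epoch :: "nat \<Rightarrow> nat \<Rightarrow> nat" where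
  "epoch H t = (t - 1) div H + 1"

definition mu :: "('arm \<Rightarrow> real^'d) \<Rightarrow> (nat \<Rightarrow> real^'d) \<Rightarrow> ('arm \<Rightarrow> real) \<Rightarrow> real
                  \<Rightarrow> 'arm set \<Rightarrow> nat \<Rightarrow> 'arm \<Rightarrow> real" where
  "mu theta x pen alpha C t a = theta a \<bullet> x t - alpha * pen a * (if a \<notin> C then 1 else 0)"

definition score :: "real \<Rightarrow> real \<Rightarrow> real \<Rightarrow> (nat \<Rightarrow> real^'d) \<Rightarrow> (nat \<Rightarrow> 'arm::finite) \<Rightarrow> (nat \<Rightarrow> real)
                  \<Rightarrow> ('arm \<Rightarrow> real) \<Rightarrow> real \<Rightarrow> 'arm set \<Rightarrow> nat \<Rightarrow> 'arm \<Rightarrow> real" where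
  "score sig lam delta x act q pen alpha C t a =
     theta_hat lam x act q a t \<bullet> x t
     + betaT sig lam delta CARD('arm) CARD('d) t * swidth lam x act a t
     - alpha * pen a * (if a \<notin> C then 1 else 0)"

end

theory Submission
  imports Defs
begin

lemma det_row_basis:
  fixes w :: "real^'n"
  shows "det (\<chi> i. if i = k then w else axis i 1) = w$k"
proof -
  have gen: "det (\<chi> i. if i = k then (w$k) *s axis k 1 + (\<Sum>j\<in>J. (w$j) *s axis j 1) else axis i (1::real)) = w$k"
    if "finite J" "k \<notin> J" for J
    using that
  proof (induction J rule: finite_induct)
    case empty
    have "(\<chi> i. if i = k then axis k 1 else axis i (1::real)) = (mat 1 :: real^'n^'n)"
      by (simp add: vec_eq_iff mat_def axis_def)
    then have "det (\<chi> i. if i = k then (w$k) *s axis k 1 else axis i (1::real)) = w$k"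
      using det_row_mul[of k "w$k" "\<lambda>i. axis k (1::real)" "\<lambda>i. axis i 1"] by simp
    then show ?case by (simp only: sum.empty add.right_neutral)
  next
    case (insert j J)
    let ?A = "(\<chi> i. if i = k then (w$k) *s axis k 1 + (\<Sum>j\<in>J. (w$j) *s axis j 1) else axis i (1::real)) :: real^'n^'n"
    have jk: "k \<noteq> j" using insert by auto
    have "(\<chi> i. if i = k then (w$k) *s axis k 1 + (\<Sum>j\<in>insert j J. (w$j) *s axis j 1) else axis i (1::real))
       = (\<chi> m. if m = k then row k ?A + (w$j) *s row j ?A else row m ?A)"
      using insert jk by (simp add: vec_eq_iff row_def algebra_simps)
    then show ?case using det_row_operation[OF jk, of ?A "w$j"] insert by simp
  qed
  have eqw: "(w$k) *s axis k 1 + (\<Sum>j\<in>UNIV-{k}. (w$j) *s axis j 1) = w"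
  proof -
    have "(\<Sum>j\<in>UNIV-{k}. (w$j) *s axis j (1::real)) $ m = (if m = k then 0 else w$m)" for m
      by (auto simp: sum_component axis_def if_distrib cong: if_cong)
    then show ?thesis by (auto simp: vec_eq_iff axis_def)
  qed
  have "det (\<chi> i. if i = k then (w$k) *s axis k 1 + (\<Sum>j\<in>UNIV-{k}. (w$j) *s axis j 1) else axis i (1::real)) = w$k"
    by (rule gen) auto
  then show ?thesis by (simp only: eqw)
qed

lemma det_row_v_aux:
  fixes u v :: "real^'n"
  assumes "finite S" "k \<notin> S"
  shows "det (\<chi> i. if i = k then v else if i \<in> S then axis i 1 + u$i *s v else axis i 1) = v$k"
  using assms
proof (induction S rule: finite_induct)
  case empty
  then show ?case using det_row_basis[of k v] by (simp only: empty_iff if_False)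
next
  case (insert j S)
  let ?A = "(\<chi> i. if i = k then v else if i \<in> S then axis i 1 + u$i *s v else axis i (1::real)) :: real^'n^'n"
  have jk: "j \<noteq> k" using insert by auto
  have eq: "(\<chi> i. if i = k then v else if i \<in> insert j S then axis i 1 + u$i *s v else axis i (1::real))
     = (\<chi> m. if m = j then row j ?A + (u$j) *s row k ?A else row m ?A)"
    using insert jk by (auto simp: vec_eq_iff row_def)
  have kS: "k \<notin> S" using insert by simp
  have "det (\<chi> i. if i = k then v else if i \<in> insert j S then axis i 1 + u$i *s v else axis i (1::real)) = det ?A"
    unfolding eq by (rule det_row_operation[OF jk])
  also have "\<dots> = v$k" by (rule insert.IH[OF kS])
  finally show ?case .
qed

lemma det_rank1:
  fixes u v :: "real^'n"
  shows "det (mat 1 + (\<chi> i j. u$i * v$j)) = 1 + u \<bullet> v"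
proof -
  have gen: "det (\<chi> i. if i \<in> S then axis i 1 + u$i *s v else axis i (1::real)) = 1 + (\<Sum>i\<in>S. u$i * v$i)"
    if "finite S" for S
    using that
  proof (induction S rule: finite_induct)
    case empty
    have "(\<chi> i. axis i (1::real)) = (mat 1 :: real^'n^'n)"
      by (simp add: vec_eq_iff mat_def axis_def)
    then show ?case by (simp only: empty_iff if_False sum.empty det_I add_0_right)
  next
    case (insert k S)
    let ?c = "\<lambda>i. if i \<in> S then axis i 1 + u$i *s v else axis i (1::real)"
    have e1: "(\<chi> i. if i \<in> insert k S then axis i 1 + u$i *s v else axis i (1::real))
       = (\<chi> i. if i = k then axis k 1 + u$k *s v else ?c i)" by (rule Cart_lambda_cong) auto
    have e2: "(\<chi> i. if i = k then axis k 1 else ?c i) = (\<chi> i. ?c i)"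
      using insert by (intro Cart_lambda_cong) auto
    have e3: "(\<chi> i. if i = k then v else ?c i) = (\<chi> i. if i = k then v else if i \<in> S then axis i 1 + u$i *s v else axis i 1)"
      by (rule Cart_lambda_cong) auto
    have "det (\<chi> i. if i \<in> insert k S then axis i 1 + u$i *s v else axis i (1::real))
        = det (\<chi> i. if i = k then axis k 1 + u$k *s v else ?c i)" by (simp only: e1)
    also have "\<dots> = det (\<chi> i. if i = k then axis k 1 else ?c i) + det (\<chi> i. if i = k then u$k *s v else ?c i)"
      by (rule det_row_add)
    also have "det (\<chi> i. if i = k then axis k 1 else ?c i) = det (\<chi> i. ?c i)" by (simp only: e2)
    also have "\<dots> = 1 + (\<Sum>i\<in>S. u$i * v$i)" by (rule insert.IH)
    also have "det (\<chi> i. if i = k then u$k *s v else ?c i) = u$k * det (\<chi> i. if i = k then v else ?c i)"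
      by (rule det_row_mul)
    also have "det (\<chi> i. if i = k then v else ?c i) = v$k"
      by (rule det_row_v_aux) (use insert in auto)
    also have "1 + (\<Sum>i\<in>S. u$i * v$i) + u$k * v$k = 1 + (\<Sum>i\<in>insert k S. u$i * v$i)"
      using insert by simp
    finally show ?case .
  qed
  have eqM: "(mat 1 + (\<chi> i j. u$i * v$j)) = (\<chi> i. if i \<in> UNIV then axis i 1 + u$i *s v else axis i (1::real))"
    by (auto simp: vec_eq_iff mat_def axis_def)
  have "det (mat 1 + (\<chi> i j. u$i * v$j)) = 1 + (\<Sum>i\<in>UNIV. u$i * v$i)"
    unfolding eqM by (rule gen) simp
  also have "(\<Sum>i\<in>UNIV. u$i * v$i) = u \<bullet> v" by (simp add: inner_vec_def)
  finally show ?thesis .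
qed

definition pdm :: "real^'n^'n \<Rightarrow> bool" where
  "pdm A \<longleftrightarrow> (\<forall>y. y \<noteq> 0 \<longrightarrow> 0 < y \<bullet> (A *v y))"

lemma pdm_diag_pos: "pdm A \<Longrightarrow> 0 < A$i$i"
proof -
  assume "pdm A"
  then have "0 < axis i 1 \<bullet> (A *v axis i (1::real))"
    unfolding pdm_def by (metis axis_eq_0_iff one_neq_zero)
  then show ?thesis by (simp add: inner_axis' matrix_vector_mult_basis column_def)
qed

lemma elim_step:
  fixes A :: "real^'n^'n" and k :: 'n
  assumes sym: "transpose A = A" and pd: "pdm A"
  defines "D \<equiv> (\<chi> i j. A$i$j - A$i$k * A$k$j / A$k$k + (if i = k \<and> j = k then A$k$k else 0))"
  shows "transpose D = D" "pdm D" "det D = det A" "\<And>i. D$i$i \<le> A$i$i"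
    "\<And>j. j \<noteq> k \<Longrightarrow> D$k$j = 0" "\<And>i j. A$i$k = 0 \<Longrightarrow> i \<noteq> k \<Longrightarrow> D$i$j = A$i$j"
proof -
  define a where "a = A$k$k"
  have apos: "0 < a" unfolding a_def by (rule pdm_diag_pos[OF pd])
  have symA: "A$i$j = A$j$i" for i j using sym by (metis transpose_def vec_lambda_beta)
  define u :: "real^'n" where "u = (\<chi> i. (if i = k then 1 else 0) - A$i$k / a)"
  define E :: "real^'n^'n" where "E = mat 1 + (\<chi> i j. u$i * (axis k 1 :: real^'n)$j)"
  have E_ent: "E$i$j = (if i = j then 1 else 0) + (if j = k then u$i else 0)" for i j
    by (simp add: E_def mat_def axis_def)
  have EA: "(E ** A)$i$j = A$i$j + u$i * A$k$j" for i j
    by (simp add: matrix_matrix_mult_def E_ent distrib_right sum.distrib if_distrib[of "\<lambda>x. x * _"] cong: if_cong)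
  have EAE: "(E ** A ** transpose E)$i$j = A$i$j + u$i * A$k$j + u$j * (A$i$k + u$i * A$k$k)" for i j
    by (simp add: matrix_matrix_mult_def[of "E ** A"] EA transpose_def E_ent distrib_left distrib_right sum.distrib if_distrib[of "\<lambda>x. _ * x"] if_distrib[of "\<lambda>x. x * _"] cong: if_cong)
  have Dij: "D$i$j = A$i$j - A$i$k * A$k$j / a + (if i = k \<and> j = k then a else 0)" for i j
    by (simp add: D_def a_def)
  have DE: "D = E ** A ** transpose E"
  proof -
    have uval: "u$i = (if i = k then 1 else 0) - A$i$k / a" for i by (simp add: u_def)
    have "D$i$j = (E ** A ** transpose E)$i$j" for i j
    proof -
      have s: "A$j$k = A$k$j" by (rule symA)
      have an: "a \<noteq> 0" using apos by simp
      show ?thesis unfolding EAE Dij uval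
        using s an by (cases "i = k"; cases "j = k") (simp_all add: field_simps a_def)
    qed
    then show ?thesis by (simp add: vec_eq_iff)
  qed
  have detE: "det E = 1"
  proof -
    have "det E = 1 + u \<bullet> axis k 1" unfolding E_def by (rule det_rank1)
    also have "\<dots> = 1" using apos by (simp add: inner_axis u_def a_def)
    finally show ?thesis .
  qed
  show "det D = det A" unfolding DE by (simp add: det_mul detE)
  have Dsym: "D$j$i = D$i$j" for i j
    unfolding Dij using symA[of i j] symA[of i k] symA[of k j] by auto
  show "transpose D = D" by (simp add: vec_eq_iff transpose_def Dsym)
  show "pdm D" unfolding pdm_def
  proof (intro allI impI)
    fix y :: "real^'n" assume y: "y \<noteq> 0"
    define z where "z = transpose E *v y"
    have "invertible (transpose E)" using detE by (simp add: invertible_det_nz)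
    then have "z \<noteq> 0" using y unfolding z_def
      by (metis inj_matrix_vector_mult injD matrix_vector_mult_0_right)
    then have "0 < z \<bullet> (A *v z)" using pd unfolding pdm_def by blast
    also have "z \<bullet> (A *v z) = y \<bullet> (D *v y)"
      unfolding DE z_def
      by (metis dot_lmul_matrix matrix_vector_mul_assoc transpose_matrix_vector)
    finally show "0 < y \<bullet> (D *v y)" .
  qed
  show "D$i$i \<le> A$i$i" for i
  proof (cases "i = k")
    case True then show ?thesis using apos by (simp add: D_def a_def)
  next
    case False
    have "0 \<le> A$i$k * A$k$i / A$k$k" using apos symA[of k i] by (simp add: a_def)
    then show ?thesis using False by (simp add: D_def)
  qed
  show "D$k$j = 0" if "j \<noteq> k" for j using that apos by (simp add: D_def a_def)
  show "D$i$j = A$i$j" if "A$i$k = 0" "i \<noteq> k" for i j using that by (simp add: D_def)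
qed

lemma elim_step_ex:
  fixes A :: "real^'n^'n"
  assumes "transpose A = A" "pdm A"
  shows "\<exists>D. transpose D = D \<and> pdm D \<and> det D = det A \<and> (\<forall>i. D$i$i \<le> A$i$i)
     \<and> (\<forall>j. j \<noteq> k \<longrightarrow> D$k$j = 0) \<and> (\<forall>i j. A$i$k = 0 \<longrightarrow> i \<noteq> k \<longrightarrow> D$i$j = A$i$j)"
proof -
  note e = elim_step[OF assms, where k = k]
  show ?thesis
    apply (rule exI[where x = "(\<chi> i j. A$i$j - A$i$k * A$k$j / A$k$k + (if i = k \<and> j = k then A$k$k else 0))"])
    apply (intro conjI allI impI)
         apply (rule e(1))
        apply (rule e(2))
       apply (rule e(3))
      apply (rule e(4))
     apply (erule e(5))
    apply (erule e(6))
    apply assumption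
    done
qed

lemma hadamard_gen:
  fixes A :: "real^'n^'n"
  assumes "finite S" "transpose A = A" "pdm A"
  shows "\<exists>D. transpose D = D \<and> pdm D \<and> det D = det A \<and> (\<forall>i. D$i$i \<le> A$i$i)
          \<and> (\<forall>i\<in>S. \<forall>j. j \<noteq> i \<longrightarrow> D$i$j = 0)"
  using assms
proof (induction S rule: finite_induct)
  case empty
  then show ?case by blast
next
  case (insert k S)
  then obtain D where D: "transpose D = D" "pdm D" "det D = det A" "\<forall>i. D$i$i \<le> A$i$i"
    "\<forall>i\<in>S. \<forall>j. j \<noteq> i \<longrightarrow> D$i$j = 0" by blast
  obtain D' where el: "transpose D' = D'" "pdm D'" "det D' = det D" "\<forall>i. D'$i$i \<le> D$i$i"
     "\<forall>j. j \<noteq> k \<longrightarrow> D'$k$j = 0" "\<forall>i j. D$i$k = 0 \<longrightarrow> i \<noteq> k \<longrightarrow> D'$i$j = D$i$j"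
    using elim_step_ex[OF D(1) D(2), of k] by blast
  have "\<forall>i. D'$i$i \<le> A$i$i" using el(4) D(4) order_trans by blast
  moreover have "\<forall>i\<in>insert k S. \<forall>j. j \<noteq> i \<longrightarrow> D'$i$j = 0"
  proof (intro ballI allI impI)
    fix i j assume i: "i \<in> insert k S" and ji: "j \<noteq> i"
    show "D'$i$j = 0"
    proof (cases "i = k")
      case True then show ?thesis using el(5) ji by simp
    next
      case False
      then have iS: "i \<in> S" using i by simp
      have "D$i$k = 0" using D(5) iS False by auto
      then have "D'$i$j = D$i$j" using el(6) False by blast
      then show ?thesis using D(5) iS ji by simp
    qed
  qed
  moreover have "det D' = det A" using el(3) D(3) by simp
  ultimately show ?case using el(1,2) by blast
qed

lemma hadamard:
  fixes A :: "real^'n^'n"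
  assumes "transpose A = A" "pdm A"
  shows "0 < det A" "det A \<le> (\<Prod>i\<in>UNIV. A$i$i)"
proof -
  obtain D where D: "transpose D = D" "pdm D" "det D = det A" "\<forall>i. D$i$i \<le> A$i$i"
    "\<forall>i\<in>UNIV. \<forall>j. j \<noteq> i \<longrightarrow> D$i$j = 0"
    using hadamard_gen[OF finite[of UNIV] assms] by blast
  have dD: "det D = (\<Prod>i\<in>UNIV. D$i$i)" by (rule det_diagonal) (use D(5) in auto)
  have pos: "0 < D$i$i" for i by (rule pdm_diag_pos[OF D(2)])
  have "0 < (\<Prod>i\<in>UNIV. D$i$i)" by (rule prod_pos) (use pos in auto)
  then show "0 < det A" using D(3) dD by simp
  show "det A \<le> (\<Prod>i\<in>UNIV. A$i$i)" unfolding D(3)[symmetric] dD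
  proof (rule prod_mono)
    fix i show "0 \<le> D$i$i \<and> D$i$i \<le> A$i$i" using pos[of i] D(4) by (simp add: less_imp_le)
  qed
qed

lemma logdet_bound:
  fixes A :: "real^'n^'n"
  assumes "transpose A = A" "pdm A"
  shows "ln (det A) \<le> real CARD('n) * ln (trace A / real CARD('n))"
proof -
  let ?n = "real CARD('n)"
  have pos: "0 < A$i$i" for i by (rule pdm_diag_pos[OF assms(2)])
  have tr: "trace A = (\<Sum>i\<in>UNIV. A$i$i)" by (simp add: trace_def)
  have trpos: "0 < trace A" unfolding tr by (rule sum_pos) (auto simp: pos)
  define m where "m = trace A / ?n"
  have mpos: "0 < m" unfolding m_def using trpos by simp
  have "ln (det A) \<le> ln (\<Prod>i\<in>UNIV. A$i$i)"
    using hadamard[OF assms] by simp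
  also have "\<dots> = (\<Sum>i\<in>UNIV. ln (A$i$i))" proof (rule ln_prod)
    show "A$i$i \<noteq> 0" for i using pos[of i] by linarith
  qed simp
  also have "\<dots> \<le> (\<Sum>i\<in>UNIV. ln m + (A$i$i / m - 1))"
  proof (rule sum_mono)
    fix i :: 'n
    have "ln (A$i$i / m) \<le> A$i$i / m - 1" using pos[of i] mpos by (intro ln_le_minus_one) simp
    then show "ln (A$i$i) \<le> ln m + (A$i$i / m - 1)" using pos[of i] mpos by (simp add: ln_div)
  qed
  also have "\<dots> = ?n * ln m + (trace A / m - ?n)"
    by (simp add: sum.distrib tr sum_divide_distrib[symmetric] sum_subtractf)
  also have "trace A / m = ?n" unfolding m_def using trpos by simp
  finally show ?thesis by (simp add: m_def)
qed

lemma outer_mulv: "outer v *v y = (v \<bullet> y) *\<^sub>R v"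
  by (simp add: vec_eq_iff outer_def matrix_vector_mult_def inner_vec_def sum_distrib_right sum_distrib_left mult_ac)

lemma qf_outer: "y \<bullet> (outer v *v y) = (v \<bullet> y)^2"
  by (simp add: outer_mulv power2_eq_square inner_commute)

lemma qf_sum: "finite S \<Longrightarrow> y \<bullet> ((\<Sum>s\<in>S. f s) *v y) = (\<Sum>s\<in>S. y \<bullet> (f s *v y))"
  for f :: "'b \<Rightarrow> real^'n^'n"
  by (induction S rule: finite_induct) (auto simp: matrix_vector_mult_add_rdistrib inner_add_right)

lemma qf_scal: "y \<bullet> ((c *\<^sub>R mat 1) *v y) = c * (y \<bullet> (y::real^'n))"
  by (simp add: scaleR_matrix_vector_assoc[symmetric])

lemma Vmat_qf:
  "y \<bullet> (Vmat lam x act a t *v y) = lam * (y \<bullet> y) + (\<Sum>s\<in>{s\<in>{1..<t}. act s = a}. (x s \<bullet> y)^2)"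
  unfolding Vmat_def by (simp add: matrix_vector_mult_add_rdistrib inner_add_right qf_scal qf_sum qf_outer)

lemma Vmat_qf_ge: "lam * (y \<bullet> y) \<le> y \<bullet> (Vmat lam x act a t *v y)"
  unfolding Vmat_qf by (simp add: sum_nonneg)

lemma Vmat_ent:
  "(Vmat lam x act a t)$i$j = lam * (if i = j then 1 else 0) + (\<Sum>s\<in>{s\<in>{1..<t}. act s = a}. x s$i * x s$j)"
  by (simp add: Vmat_def outer_def mat_def)

lemma Vmat_sym: "transpose (Vmat lam x act a t) = Vmat lam x act a t"
  by (simp add: vec_eq_iff transpose_def Vmat_ent mult.commute)

lemma Vmat_pdm:
  fixes x :: "nat \<Rightarrow> real^'d"
  shows "lam > 0 \<Longrightarrow> pdm (Vmat lam x act a t)"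
  unfolding pdm_def
proof (intro allI impI)
  fix y :: "real^'d" assume "lam > 0" "y \<noteq> 0"
  then have "0 < lam * (y \<bullet> y)" by simp
  then show "0 < y \<bullet> (Vmat lam x act a t *v y)" using Vmat_qf_ge[of lam y x act a t] by linarith
qed

lemma pdm_invertible:
  fixes A :: "real^'n^'n"
  assumes "pdm A" shows "invertible A"
proof -
  have "\<forall>y. A *v y = 0 \<longrightarrow> y = 0" using assms unfolding pdm_def by (metis inner_zero_right less_irrefl)
  then have "\<exists>B. B ** A = mat 1" using matrix_left_invertible_ker by blast
  then show ?thesis using invertible_left_inverse by blast
qed

lemma matrix_inv_props:
  fixes A :: "real^'n^'n"
  assumes "invertible A"
  shows "A ** matrix_inv A = mat 1" "matrix_inv A ** A = mat 1"
proof -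
  have "\<exists>A'. A ** A' = mat 1 \<and> A' ** A = mat 1" using assms unfolding invertible_def by blast
  then have "A ** matrix_inv A = mat 1 \<and> matrix_inv A ** A = mat 1"
    unfolding matrix_inv_def by (rule someI_ex)
  then show "A ** matrix_inv A = mat 1" "matrix_inv A ** A = mat 1" by auto
qed

lemma width_bound:
  fixes A :: "real^'n^'n"
  assumes lam: "lam > 0" and qf: "\<And>y. lam * (y \<bullet> y) \<le> y \<bullet> (A *v y)"
      and inv: "invertible A"
  shows "0 \<le> w \<bullet> (matrix_inv A *v w)" "w \<bullet> (matrix_inv A *v w) \<le> (norm w)^2 / lam"
proof -
  define z where "z = matrix_inv A *v w"
  have Az: "A *v z = w" unfolding z_def
    by (simp add: matrix_vector_mul_assoc matrix_inv_props[OF inv])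
  have wz: "w \<bullet> z = z \<bullet> (A *v z)" using Az by (simp add: inner_commute)
  have ge: "lam * (norm z)^2 \<le> w \<bullet> z" using qf[of z] wz by (simp add: power2_norm_eq_inner)
  then show "0 \<le> w \<bullet> (matrix_inv A *v w)" unfolding z_def[symmetric]
    using lam by (meson order_trans zero_le_power2 mult_nonneg_nonneg less_imp_le)
  have cs: "w \<bullet> z \<le> norm w * norm z" by (rule norm_cauchy_schwarz)
  have nz: "lam * norm z \<le> norm w"
  proof (cases "norm z = 0")
    case True then show ?thesis by simp
  next
    case False
    then have "0 < norm z" by simp
    moreover have "lam * norm z * norm z \<le> norm w * norm z" using ge cs by (simp add: power2_eq_square mult.assoc)
    ultimately show ?thesis by simp
  qed
  have "w \<bullet> z \<le> norm w * (norm w / lam)"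
  proof -
    have "norm z \<le> norm w / lam" using nz lam by (simp add: field_simps)
    then have "norm w * norm z \<le> norm w * (norm w / lam)" by (rule mult_left_mono) simp
    then show ?thesis using cs by linarith
  qed
  then show "w \<bullet> (matrix_inv A *v w) \<le> (norm w)^2 / lam" unfolding z_def[symmetric]
    by (simp add: power2_eq_square)
qed

lemma det_update:
  fixes A :: "real^'n^'n"
  assumes inv: "invertible A"
  shows "det (A + outer w) = det A * (1 + w \<bullet> (matrix_inv A *v w))"
proof -
  define u where "u = matrix_inv A *v w"
  have Au: "A *v u = w" unfolding u_def
    by (simp add: matrix_vector_mul_assoc matrix_inv_props[OF inv])
  have "A ** (\<chi> i j. u$i * w$j) = outer w"
  proof -
    have "(A ** (\<chi> i j. u$i * w$j))$i$j = (A *v u)$i * w$j" for i j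
      by (simp add: matrix_matrix_mult_def matrix_vector_mult_def sum_distrib_right mult.assoc)
    then show ?thesis using Au by (simp add: vec_eq_iff outer_def)
  qed
  then have "A + outer w = A ** (mat 1 + (\<chi> i j. u$i * w$j))"
    by (simp add: matrix_add_ldistrib)
  then have "det (A + outer w) = det A * (1 + u \<bullet> w)" by (simp add: det_mul det_rank1)
  then show ?thesis by (simp add: u_def inner_commute)
qed

lemma Vmat_Suc:
  "Vmat lam x act a (Suc t) = Vmat lam x act a t + (if 1 \<le> t \<and> act t = a then outer (x t) else 0)"
proof (cases "1 \<le> t \<and> act t = a")
  case True
  then have "{s\<in>{1..<Suc t}. act s = a} = insert t {s\<in>{1..<t}. act s = a}" by auto
  then show ?thesis using True by (simp add: Vmat_def algebra_simps)
next
  case False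
  then have "{s\<in>{1..<Suc t}. act s = a} = {s\<in>{1..<t}. act s = a}" by (auto simp: less_Suc_eq)
  then show ?thesis unfolding if_not_P[OF False] Vmat_def by simp
qed

lemma Vmat_1: "Vmat lam x act a (Suc 0) = lam *\<^sub>R mat 1"
  by (simp add: Vmat_def)

lemma det_scal_id: "det (lam *\<^sub>R (mat 1 :: real^'n^'n)) = lam ^ CARD('n)"
proof -
  have "det (lam *\<^sub>R (mat 1 :: real^'n^'n)) = (\<Prod>i\<in>UNIV. (lam *\<^sub>R (mat 1 :: real^'n^'n))$i$i)"
    by (rule det_diagonal) (simp add: mat_def)
  also have "\<dots> = lam ^ CARD('n)" by (simp add: mat_def)
  finally show ?thesis .
qed

definition sw2 :: "real \<Rightarrow> (nat \<Rightarrow> real^'d) \<Rightarrow> (nat \<Rightarrow> 'arm) \<Rightarrow> 'arm \<Rightarrow> nat \<Rightarrow> real" where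
  "sw2 lam x act a t = x t \<bullet> (matrix_inv (Vmat lam x act a t) *v x t)"

lemma det_prod:
  fixes x :: "nat \<Rightarrow> real^'d"
  assumes lam: "lam > 0"
  shows "det (Vmat lam x act a (Suc T)) = lam ^ CARD('d) * (\<Prod>t\<in>{t\<in>{1..T}. act t = a}. 1 + sw2 lam x act a t)"
proof (induction T)
  case 0
  then show ?case by (simp add: Vmat_1 det_scal_id)
next
  case (Suc T)
  have inv: "invertible (Vmat lam x act a (Suc T))" by (rule pdm_invertible[OF Vmat_pdm[OF lam]])
  show ?case
  proof (cases "act (Suc T) = a")
    case True
    have S: "{t\<in>{1..Suc T}. act t = a} = insert (Suc T) {t\<in>{1..T}. act t = a}" using True by auto
    have "det (Vmat lam x act a (Suc (Suc T))) = det (Vmat lam x act a (Suc T) + outer (x (Suc T)))"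
      using True by (simp only: Vmat_Suc[of lam x act a "Suc T"]) simp
    also have "\<dots> = det (Vmat lam x act a (Suc T)) * (1 + sw2 lam x act a (Suc T))"
      unfolding sw2_def by (rule det_update[OF inv])
    finally show ?thesis unfolding S Suc by (simp add: mult_ac)
  next
    case False
    have S: "{t\<in>{1..Suc T}. act t = a} = {t\<in>{1..T}. act t = a}" using False by (auto simp: le_Suc_eq)
    have "det (Vmat lam x act a (Suc (Suc T))) = det (Vmat lam x act a (Suc T))"
      using False by (simp only: Vmat_Suc[of lam x act a "Suc T"]) simp
    then show ?thesis unfolding S Suc by simp
  qed
qed

lemma lin_log: "0 \<le> u \<Longrightarrow> u \<le> 1 \<Longrightarrow> u \<le> 2 * ln (1 + (u::real))"
proof -
  assume u: "0 \<le> u" "u \<le> 1"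
  have "ln (1 / (1 + u)) \<le> 1 / (1 + u) - 1" using u by (intro ln_le_minus_one) simp
  then have "u / (1 + u) \<le> ln (1 + u)" using u by (simp add: ln_div field_simps)
  moreover have "u / 2 \<le> u / (1 + u)" by (rule divide_left_mono) (use u in auto)
  ultimately have "u / 2 \<le> ln (1 + u)" by linarith
  then show ?thesis by linarith
qed

lemma trace_Vmat:
  "trace (Vmat lam x act a t) = real CARD('d) * lam + (\<Sum>s\<in>{s\<in>{1..<t}. act s = a}. (norm (x s))^2)"
  for x :: "nat \<Rightarrow> real^'d"
proof -
  have "trace (Vmat lam x act a t) = (\<Sum>i\<in>UNIV. lam + (\<Sum>s\<in>{s\<in>{1..<t}. act s = a}. x s$i * x s$i))"
    by (simp add: trace_def Vmat_ent)
  also have "\<dots> = real CARD('d) * lam + (\<Sum>s\<in>{s\<in>{1..<t}. act s = a}. \<Sum>i\<in>UNIV. x s$i * x s$i)"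
    by (simp add: sum.distrib sum.swap[of _ UNIV])
  also have "(\<Sum>s\<in>{s\<in>{1..<t}. act s = a}. \<Sum>i\<in>UNIV. x s$i * x s$i) = (\<Sum>s\<in>{s\<in>{1..<t}. act s = a}. (norm (x s))^2)"
    by (simp add: power2_norm_eq_inner inner_vec_def)
  finally show ?thesis .
qed

lemma sw2_bounds:
  fixes x :: "nat \<Rightarrow> real^'d"
  assumes lam: "lam \<ge> 1" and ctx: "\<And>t. norm (x t) \<le> 1"
  shows "0 \<le> sw2 lam x act a t" "sw2 lam x act a t \<le> 1"
proof -
  have lp: "lam > 0" using lam by simp
  have inv: "invertible (Vmat lam x act a t)" by (rule pdm_invertible[OF Vmat_pdm[OF lp]])
  note wb = width_bound[OF lp Vmat_qf_ge inv, of "x t"]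
  show "0 \<le> sw2 lam x act a t" unfolding sw2_def by (rule wb(1))
  have "(norm (x t))^2 \<le> 1" using ctx[of t] by (simp add: power_le_one)
  then have "(norm (x t))^2 / lam \<le> 1" using lam by (simp add: divide_le_eq)
  then show "sw2 lam x act a t \<le> 1" unfolding sw2_def using wb(2) by linarith
qed

lemma arm_bound:
  fixes x :: "nat \<Rightarrow> real^'d"
  assumes lam: "lam \<ge> 1" and ctx: "\<And>t. norm (x t) \<le> 1"
  shows "(\<Sum>t\<in>{t\<in>{1..T}. act t = a}. sw2 lam x act a t)
           \<le> 2 * real CARD('d) * ln (1 + real T / (real CARD('d) * lam))"
proof -
  let ?S = "{t\<in>{1..T}. act t = a}"
  let ?V = "Vmat lam x act a (Suc T)"
  let ?n = "real CARD('d)"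
  let ?P = "\<Prod>t\<in>?S. 1 + sw2 lam x act a t"
  have lp: "lam > 0" using lam by simp
  note bnd = sw2_bounds[of lam x, OF lam ctx]
  have "(\<Sum>t\<in>?S. sw2 lam x act a t) \<le> (\<Sum>t\<in>?S. 2 * ln (1 + sw2 lam x act a t))"
    by (rule sum_mono) (rule lin_log[OF bnd])
  also have "\<dots> = 2 * ln ?P"
    by (simp add: sum_distrib_left[symmetric] ln_prod bnd(1) add_nonneg_eq_0_iff)
  finally have s1: "(\<Sum>t\<in>?S. sw2 lam x act a t) \<le> 2 * ln ?P" .
  have Ppos: "0 < ?P"
  proof (rule prod_pos)
    fix t show "0 < 1 + sw2 lam x act a t" using bnd(1)[of act a t] by linarith
  qed
  have dV: "det ?V = lam ^ CARD('d) * ?P" by (rule det_prod[OF lp])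
  have "ln (det ?V) = ln (lam ^ CARD('d)) + ln ?P"
    unfolding dV by (rule ln_mult_pos) (use lp Ppos in auto)
  also have "ln (lam ^ CARD('d)) = ?n * ln lam" using lp by (simp add: ln_realpow)
  finally have "ln (det ?V) = ?n * ln lam + ln ?P" .
  moreover have "ln (det ?V) \<le> ?n * ln (trace ?V / ?n)"
    by (rule logdet_bound[OF Vmat_sym Vmat_pdm[OF lp]])
  ultimately have s2: "ln ?P \<le> ?n * (ln (trace ?V / ?n) - ln lam)" by (simp add: algebra_simps)
  have trpos: "0 < trace ?V" using logdet_bound Vmat_sym
    by (simp add: trace_Vmat lp sum_nonneg add_pos_nonneg)
  have "(\<Sum>s\<in>{s\<in>{1..<Suc T}. act s = a}. (norm (x s))^2) \<le> (\<Sum>s\<in>{s\<in>{1..<Suc T}. act s = a}. 1)"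
    by (rule sum_mono) (use ctx in \<open>simp add: power_le_one\<close>)
  also have "\<dots> = real (card {s\<in>{1..<Suc T}. act s = a})" by simp
  also have "\<dots> \<le> real T"
  proof -
    have "card {s\<in>{1..<Suc T}. act s = a} \<le> card {1..<Suc T}" by (rule card_mono) auto
    then show ?thesis by simp
  qed
  finally have tr: "trace ?V \<le> ?n * lam + real T" unfolding trace_Vmat by simp
  have "ln (trace ?V / ?n) - ln lam = ln (trace ?V / (?n * lam))"
    using trpos lp by (simp add: ln_div ln_mult_pos)
  also have "\<dots> \<le> ln ((?n * lam + real T) / (?n * lam))"
    using trpos lp tr by (subst ln_le_cancel_iff) (auto intro: divide_right_mono)
  also have "(?n * lam + real T) / (?n * lam) = 1 + real T / (?n * lam)"
    using lp by (simp add: field_simps)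
  finally have "ln (trace ?V / ?n) - ln lam \<le> ln (1 + real T / (?n * lam))" .
  then have "?n * (ln (trace ?V / ?n) - ln lam) \<le> ?n * ln (1 + real T / (?n * lam))"
    by (rule mult_left_mono) simp
  then show ?thesis using s1 s2 by linarith
qed

theorem lemmaC2:
  fixes theta :: "'arm::finite \<Rightarrow> real^'d"
    and x :: "nat \<Rightarrow> real^'d"
    and act :: "nat \<Rightarrow> 'arm"
    and q eta :: "nat \<Rightarrow> real"
    and pen :: "'arm \<Rightarrow> real"
    and C :: "nat \<Rightarrow> 'arm set"
    and alpha lam sig delta :: real
    and H K T :: nat
  assumes lam: "lam \<ge> 1"
    and alpha: "alpha > 0"
    and pen: "\<And>a. pen a > 0"
    and sig: "sig > 0"
    and delta: "0 < delta" "delta < 1"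
    and H: "H > 0"
    and cache: "\<And>l. card (C l) \<le> K"
    and ctx: "\<And>t. norm (x t) \<le> 1"
    and obs: "\<And>t. q t = theta (act t) \<bullet> x t + eta t"
    and play: "\<And>t b. 1 \<le> t \<Longrightarrow>
         score sig lam delta x act q pen alpha (C (epoch H t)) t b
           \<le> score sig lam delta x act q pen alpha (C (epoch H t)) t (act t)"
    and event: "\<And>a t. 1 \<le> t \<Longrightarrow> t \<le> T \<Longrightarrow>
         \<bar>x t \<bullet> (theta_hat lam x act q a t - theta a)\<bar>
           \<le> betaT sig lam delta CARD('arm) CARD('d) t * swidth lam x act a t"
  shows "(\<Sum>t=1..T. Max (range (mu theta x pen alpha (C (epoch H t)) t))
                     - mu theta x pen alpha (C (epoch H t)) t (act t))
         \<le> 2 * betaT sig lam delta CARD('arm) CARD('d) T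
             * sqrt (2 * real CARD('arm) * real CARD('d) * real T
                     * ln (1 + real T / (real CARD('d) * lam)))"
proof -
  let ?n = "real CARD('d)"
  let ?N = "real CARD('arm)"
  let ?L = "ln (1 + real T / (?n * lam))"
  define \<beta> where "\<beta> t = betaT sig lam delta CARD('arm) CARD('d) t" for t
  define sw where "sw t = swidth lam x act (act t) t" for t
  have lp: "lam > 0" using lam by simp
  have npos: "?n > 0" by simp
  note bnd = sw2_bounds[of lam x, OF lam ctx]
  have swid: "swidth lam x act a t = sqrt (sw2 lam x act a t)" for a t
    by (simp add: swidth_def sw2_def)
  have sw_nn: "0 \<le> swidth lam x act a t" for a t unfolding swid using bnd(1) by simp
  have sw_sq: "(sw t)^2 = sw2 lam x act (act t) t" for t
    unfolding sw_def swid using bnd(1) by simp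
  have beta_mono: "\<beta> t \<le> \<beta> T" if "t \<le> T" for t
  proof -
    have "real t / (?n * lam) \<le> real T / (?n * lam)"
      using that lp by (intro divide_right_mono) auto
    then have "ln (1 + real t / (?n * lam)) \<le> ln (1 + real T / (?n * lam))"
      using lp by (subst ln_le_cancel_iff) (auto intro: add_pos_nonneg)
    then have "?n * ln (1 + real t / (?n * lam)) + 2 * ln (?N / delta)
        \<le> ?n * ln (1 + real T / (?n * lam)) + 2 * ln (?N / delta)"
      by (simp add: mult_left_mono)
    then have "sqrt (?n * ln (1 + real t / (?n * lam)) + 2 * ln (?N / delta))
        \<le> sqrt (?n * ln (1 + real T / (?n * lam)) + 2 * ln (?N / delta))"
      by (rule real_sqrt_le_mono)
    then show ?thesis unfolding \<beta>_def betaT_def using sig by (simp add: mult_left_mono)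
  qed
  have beta_nn: "0 \<le> \<beta> T"
  proof -
    have "0 \<le> ln (1 + real T / (?n * lam))" using lp by (intro ln_ge_zero) simp
    moreover have "1 \<le> ?N / delta"
    proof -
      have "delta \<le> ?N" using delta by (simp add: less_imp_le order_trans[of delta 1])
      then show ?thesis using delta by (simp add: le_divide_eq)
    qed
    then have "0 \<le> ln (?N / delta)" by (intro ln_ge_zero) simp
    ultimately have "0 \<le> ?n * ln (1 + real T / (?n * lam)) + 2 * ln (?N / delta)" by simp
    then have "0 \<le> sig * sqrt (?n * ln (1 + real T / (?n * lam)) + 2 * ln (?N / delta))"
      using sig by simp
    moreover have "0 \<le> sqrt lam" using lp by simp
    ultimately show ?thesis unfolding \<beta>_def betaT_def by linarith
  qed
  have reg: "Max (range (mu theta x pen alpha (C (epoch H t)) t)) - mu theta x pen alpha (C (epoch H t)) t (act t)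
      \<le> 2 * \<beta> T * sw t" if t: "t \<in> {1..T}" for t
  proof -
    let ?C = "C (epoch H t)"
    let ?mu = "mu theta x pen alpha ?C t"
    let ?sc = "score sig lam delta x act q pen alpha ?C t"
    have "Max (range ?mu) \<in> range ?mu" by (rule Max_in) auto
    then obtain b where b: "Max (range ?mu) = ?mu b" by (metis rangeE)
    have t1: "1 \<le> t" "t \<le> T" using t by auto
    have evb: "\<bar>x t \<bullet> (theta_hat lam x act q b t - theta b)\<bar> \<le> \<beta> t * swidth lam x act b t"
      using event[OF t1] unfolding \<beta>_def by blast
    have eva: "\<bar>x t \<bullet> (theta_hat lam x act q (act t) t - theta (act t))\<bar> \<le> \<beta> t * swidth lam x act (act t) t"
      using event[OF t1] unfolding \<beta>_def by blast
    have pl: "?sc b \<le> ?sc (act t)" by (rule play[OF t1(1)])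
    have e1: "x t \<bullet> (theta_hat lam x act q c t - theta c) = theta_hat lam x act q c t \<bullet> x t - theta c \<bullet> x t" for c
      by (simp add: inner_diff_right inner_commute)
    have "?mu b - ?mu (act t) \<le> 2 * \<beta> t * sw t"
      using evb eva pl unfolding mu_def score_def e1 sw_def \<beta>_def[symmetric] by (simp add: abs_le_iff)
    also have "\<dots> \<le> 2 * \<beta> T * sw t"
      using beta_mono[OF t1(2)] sw_nn unfolding sw_def by (simp add: mult_right_mono)
    finally show ?thesis using b by simp
  qed
  have "(\<Sum>t=1..T. Max (range (mu theta x pen alpha (C (epoch H t)) t)) - mu theta x pen alpha (C (epoch H t)) t (act t))
      \<le> (\<Sum>t=1..T. 2 * \<beta> T * sw t)"
    by (rule sum_mono) (rule reg)
  also have "\<dots> = 2 * \<beta> T * (\<Sum>t=1..T. sw t)" by (simp add: sum_distrib_left)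
  also have "(\<Sum>t=1..T. sw t) \<le> sqrt (real T * (2 * ?N * ?n * ?L))"
  proof -
    have "(\<Sum>t=1..T. (sw t)^2) = (\<Sum>t\<in>{1..T}. sw2 lam x act (act t) t)" by (simp add: sw_sq)
    also have "\<dots> = (\<Sum>a\<in>UNIV. \<Sum>t\<in>{t\<in>{1..T}. act t = a}. sw2 lam x act (act t) t)"
      by (rule sum.group[symmetric]) auto
    also have "\<dots> = (\<Sum>a\<in>UNIV. \<Sum>t\<in>{t\<in>{1..T}. act t = a}. sw2 lam x act a t)"
      by (rule sum.cong) (auto intro: sum.cong)
    also have "\<dots> \<le> (\<Sum>a\<in>(UNIV::'arm set). 2 * ?n * ?L)"
      by (rule sum_mono) (rule arm_bound[OF lam ctx])
    also have "\<dots> = 2 * ?N * ?n * ?L" by simp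
    finally have sq: "(\<Sum>t=1..T. (sw t)^2) \<le> 2 * ?N * ?n * ?L" .
    have "(\<Sum>t=1..T. sw t)^2 \<le> (\<Sum>t=1..T. (sw t)^2) * real (card {1..T})"
      by (rule sum_squared_le_sum_of_squares)
    also have "\<dots> \<le> (2 * ?N * ?n * ?L) * real T" using sq by (simp add: mult_right_mono)
    finally have "(\<Sum>t=1..T. sw t)^2 \<le> real T * (2 * ?N * ?n * ?L)" by (simp add: mult.commute)
    then show ?thesis by (rule real_le_rsqrt)
  qed
  then have "2 * \<beta> T * (\<Sum>t=1..T. sw t) \<le> 2 * \<beta> T * sqrt (real T * (2 * ?N * ?n * ?L))"
    using beta_nn by (simp add: mult_left_mono)
  also have "real T * (2 * ?N * ?n * ?L) = 2 * ?N * ?n * real T * ?L" by (simp add: mult_ac)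
  finally show ?thesis unfolding \<beta>_def .
qed

end
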